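(* Let $z$ be an upper bound on the maximum degree of $\Gamma_X$ and $p_0=(8z)^{-2}$. If the bulk error $Z(\eta)\leftarrow\mathcal N(p)$ with $p<p_0$, then the probability that some maximal connected set of marked vertices in the subgraph of $\Gamma_X$ induced on its bulk vertices contains both a vertex of layer $2$ and a vertex of layer $2T$ (i.e. $1-\Pr[\mathsf{CC}_X]$) is at most $$m_x\,\frac{(p/p_0)^{T/2}}{1-\sqrt{p/p_0}}.$$
   Context: $Q=(H^X,H^Z)$ is a CSS code: full-rank $H^X\in\mathbb F_2^{m_x\times n}$, $H^Z\in\mathbb F_2^{m_z\times n}$ with $H^X(H^Z)^T=0$; write $i\sim c$ if qubit $i$ is in the support of check $c$. $Q$ is $\ell$-LDPC (rows of weight $\le\ell$, each qubit in $\le\ell$ checks). A random Pauli error $E$ is local stochastic of rate $p$, $E\leftarrow\mathcal N(p)$, if $\Pr[S\subseteq\mathrm{supp}(E)]\le p^{|S|}$ for every set $S$ of qubits. ATG: fix $T\ge1$; graph with code vertices $q_{i,t}$ ($i\in[n]$, $t\in[2T+1]$), Z-check vertices $z_{c,t}$ ($c\in[m_z]$, $t$ odd), X-check vertices $x_{c,t}$ ($c\in[m_x]$, $t$ even); edges $q_{i,t}q_{i,t+1}$, $q_{i,t}z_{c,t}$ ($t$ odd, $H^Z_{c,i}=1$), $q_{i,t}x_{c,t}$ ($t$ even, $H^X_{c,i}=1$). Boundary $\partial=\{q_{i,1},q_{i,2T+1}\}$, bulk $\mathcal B=$ all other vertices. Decoding setup. A Z-type bulk error is $\eta\in\{0,1\}^{\mathcal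 B}$ with components $P_t\in\{0,1\}^n$ (code vertices of layer $t$, $2\le t\le 2T$) and $B_t$ (check vertices of layer $t$). The meta-check vectors are the indicator vectors $\alpha\in\{0,1\}^{\mathcal B}$ of the sets $\{z_{c,t-1},z_{c,t+1}\}\cup\{q_{i,t}:i\sim c\}$ ($t$ even, $c\in[m_z]$) and $\{x_{c,t-1},x_{c,t+1}\}\cup\{q_{i,t}:i\sim c\}$ ($t$ odd, $3\le t\le 2T-1$, $c\in[m_x]$). The decoder outputs a minimum-Hamming-weight $\beta\in\{0,1\}^{\mathcal B}$ with $\alpha\cdot\beta=\alpha\cdot\eta\pmod 2$ for all meta-check vectors $\alpha$; $R_t,C_t$ denote the components of $\beta$ analogous to $P_t,B_t$. X syndrome adjacency graph $\Gamma_X$: vertex set $\{q_{i,t}: i\in[n], t\text{ odd in }[2T+1]\}\cup\{x_{c,t}:c\in[m_x], t\text{ even in }[2T]\}$; two distinct vertices are adjacent iff both lie in one of the sets $\{x_{c,t-1},x_{c,t+1}\}\cup\{q_{i,t}:i\sim c\}$ (odd $3\le t\le2T-1$), $\{x_{c,2}\}\cup\{q_{i,1}:i\sim c\}$, or $\{x_{c,2T}\}\cup\{q_{i,2T+1}:i\sim c\}$ ($c\in[m_x]$). Its boundary vertices are $q_{i,1},q_{i,2T+1}$; all others are its bulk vertices. Marking of bulk vertices: $q_{i,t}$ is marked iff $(P_t)_i\ne(R_t)_i$; $x_{c,t}$ is marked iff $(B_t)_c\ne(C_t)_c$. $\mathsf{CC}_X$ is the event that no maximal connected set of marked vertices in the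 subgraph of $\Gamma_X$ induced on its bulk vertices contains both a vertex of layer $2$ and a vertex of layer $2T$. *)

theory Defs
  imports "HOL-Probability.Probability_Mass_Function"
begin

text \<open>Vertices of the ATG: Qv i t = q_{i,t}, Zv c t = z_{c,t}, Xv c t = x_{c,t}.
  Qubit indices i < n, check indices c < m, layers t in {1..2T+1}.
  Parity-check matrices are given as Boolean functions (H c i = True iff entry is 1).\<close>

datatype atg_vertex = Qv nat nat | Zv nat nat | Xv nat nat

fun layer :: "atg_vertex \<Rightarrow> nat" where
  "layer (Qv i t) = t" | "layer (Zv c t) = t" | "layer (Xv c t) = t"

text \<open>Full row rank over F_2: no nonempty set of rows sums to zero.\<close>
definition full_rank_F2 :: "nat \<Rightarrow> nat \<Rightarrow> (nat \<Rightarrow> nat \<Rightarrow> bool) \<Rightarrow> bool" where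
  "full_rank_F2 m n H \<longleftrightarrow>
     (\<forall>R \<subseteq> {..<m}. R \<noteq> {} \<longrightarrow> (\<exists>i<n. odd (card {c\<in>R. H c i})))"

definition css_code :: "nat \<Rightarrow> nat \<Rightarrow> nat \<Rightarrow> (nat \<Rightarrow> nat \<Rightarrow> bool) \<Rightarrow> (nat \<Rightarrow> nat \<Rightarrow> bool) \<Rightarrow> bool" where
  "css_code n mx mz HX HZ \<longleftrightarrow> full_rank_F2 mx n HX \<and> full_rank_F2 mz n HZ \<and>
     (\<forall>c<mx. \<forall>c'<mz. even (card {i. i < n \<and> HX c i \<and> HZ c' i}))"

text \<open>Bulk vertices of the ATG (everything except q_{i,1}, q_{i,2T+1}).\<close>
definition atg_bulk :: "nat \<Rightarrow> nat \<Rightarrow> nat \<Rightarrow> nat \<Rightarrow> atg_vertex set" where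
  "atg_bulk n mx mz T =
     {Qv i t | i t. i < n \<and> 2 \<le> t \<and> t \<le> 2*T}
   \<union> {Zv c t | c t. c < mz \<and> odd t \<and> 1 \<le> t \<and> t \<le> 2*T+1}
   \<union> {Xv c t | c t. c < mx \<and> even t \<and> 2 \<le> t \<and> t \<le> 2*T}"

text \<open>Supports of the meta-check vectors alpha.\<close>
definition meta_checks :: "nat \<Rightarrow> nat \<Rightarrow> nat \<Rightarrow> (nat \<Rightarrow> nat \<Rightarrow> bool) \<Rightarrow> (nat \<Rightarrow> nat \<Rightarrow> bool)
    \<Rightarrow> nat \<Rightarrow> atg_vertex set set" where
  "meta_checks n mx mz HX HZ T =
     {{Zv c (t-1), Zv c (t+1)} \<union> {Qv i t | i. i < n \<and> HZ c i} | c t.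
        c < mz \<and> even t \<and> 2 \<le> t \<and> t \<le> 2*T}
   \<union> {{Xv c (t-1), Xv c (t+1)} \<union> {Qv i t | i. i < n \<and> HX c i} | c t.
        c < mx \<and> odd t \<and> 3 \<le> t \<and> t \<le> 2*T - 1}"

definition same_metasyndrome :: "atg_vertex set set \<Rightarrow> (atg_vertex \<Rightarrow> bool) \<Rightarrow> (atg_vertex \<Rightarrow> bool) \<Rightarrow> bool" where
  "same_metasyndrome M eta beta \<longleftrightarrow>
     (\<forall>A\<in>M. even (card (A \<inter> {v. beta v})) = even (card (A \<inter> {v. eta v})))"

definition min_weight_decoding :: "nat \<Rightarrow> nat \<Rightarrow> nat \<Rightarrow> (nat \<Rightarrow> nat \<Rightarrow> bool) \<Rightarrow> (nat \<Rightarrow> nat \<Rightarrow> bool)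
    \<Rightarrow> nat \<Rightarrow> (atg_vertex \<Rightarrow> bool) \<Rightarrow> (atg_vertex \<Rightarrow> bool) \<Rightarrow> bool" where
  "min_weight_decoding n mx mz HX HZ T eta beta \<longleftrightarrow>
     {v. beta v} \<subseteq> atg_bulk n mx mz T \<and>
     same_metasyndrome (meta_checks n mx mz HX HZ T) eta beta \<and>
     (\<forall>beta'. {v. beta' v} \<subseteq> atg_bulk n mx mz T \<longrightarrow>
        same_metasyndrome (meta_checks n mx mz HX HZ T) eta beta' \<longrightarrow>
        card {v. beta v} \<le> card {v. beta' v})"

definition gx_vertices :: "nat \<Rightarrow> nat \<Rightarrow> nat \<Rightarrow> atg_vertex set" where
  "gx_vertices n mx T =
     {Qv i t | i t. i < n \<and> odd t \<and> 1 \<le> t \<and> t \<le> 2*T+1}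
   \<union> {Xv c t | c t. c < mx \<and> even t \<and> 2 \<le> t \<and> t \<le> 2*T}"

definition gx_sets :: "nat \<Rightarrow> nat \<Rightarrow> (nat \<Rightarrow> nat \<Rightarrow> bool) \<Rightarrow> nat \<Rightarrow> atg_vertex set set" where
  "gx_sets n mx HX T =
     {{Xv c (t-1), Xv c (t+1)} \<union> {Qv i t | i. i < n \<and> HX c i} | c t.
        c < mx \<and> odd t \<and> 3 \<le> t \<and> t \<le> 2*T - 1}
   \<union> {insert (Xv c 2) {Qv i 1 | i. i < n \<and> HX c i} | c. c < mx}
   \<union> {insert (Xv c (2*T)) {Qv i (2*T+1) | i. i < n \<and> HX c i} | c. c < mx}"

definition gx_adj :: "nat \<Rightarrow> nat \<Rightarrow> (nat \<Rightarrow> nat \<Rightarrow> bool) \<Rightarrow> nat \<Rightarrow> atg_vertex \<Rightarrow> atg_vertex \<Rightarrow> bool" where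
  "gx_adj n mx HX T u v \<longleftrightarrow> u \<noteq> v \<and> (\<exists>A\<in>gx_sets n mx HX T. u \<in> A \<and> v \<in> A)"

definition gx_bulk :: "nat \<Rightarrow> nat \<Rightarrow> nat \<Rightarrow> atg_vertex set" where
  "gx_bulk n mx T = gx_vertices n mx T - {Qv i t | i t. t = 1 \<or> t = 2*T+1}"

definition marked :: "nat \<Rightarrow> nat \<Rightarrow> nat \<Rightarrow> (atg_vertex \<Rightarrow> bool) \<Rightarrow> (atg_vertex \<Rightarrow> bool) \<Rightarrow> atg_vertex \<Rightarrow> bool" where
  "marked n mx T eta beta v \<longleftrightarrow> v \<in> gx_bulk n mx T \<and> eta v \<noteq> beta v"

definition CC_X :: "nat \<Rightarrow> nat \<Rightarrow> (nat \<Rightarrow> nat \<Rightarrow> bool) \<Rightarrow> nat \<Rightarrow> (atg_vertex \<Rightarrow> bool) \<Rightarrow> (atg_vertex \<Rightarrow> bool) \<Rightarrow> bool" where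
  "CC_X n mx HX T eta beta \<longleftrightarrow>
     \<not> (\<exists>u v. marked n mx T eta beta u \<and> marked n mx T eta beta v \<and>
              layer u = 2 \<and> layer v = 2*T \<and>
              (\<lambda>a b. gx_adj n mx HX T a b \<and> marked n mx T eta beta a \<and> marked n mx T eta beta b)\<^sup>*\<^sup>* u v)"

definition local_stochastic :: "atg_vertex set \<Rightarrow> real \<Rightarrow> (atg_vertex \<Rightarrow> bool) pmf \<Rightarrow> bool" where
  "local_stochastic B p D \<longleftrightarrow>
     (\<forall>eta\<in>set_pmf D. {v. eta v} \<subseteq> B) \<and>
     (\<forall>S \<subseteq> B. measure_pmf.prob D {eta. S \<subseteq> {v. eta v}} \<le> p ^ card S)"

end

theory Submission
  imports Defs
begin


definition conn_from :: "('a \<Rightarrow> 'a \<Rightarrow> bool) \<Rightarrow> 'a \<Rightarrow> 'a set \<Rightarrow> bool" where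
  "conn_from E v K \<longleftrightarrow> v \<in> K \<and> (\<forall>b\<in>K. (\<lambda>x y. E x y \<and> x \<in> K \<and> y \<in> K)\<^sup>*\<^sup>* v b)"

definition bdry :: "('a \<Rightarrow> 'a \<Rightarrow> bool) \<Rightarrow> 'a set \<Rightarrow> 'a set \<Rightarrow> 'a set" where
  "bdry E V K = {w\<in>V - K. \<exists>a\<in>K. E a w}"

lemma binsum:
  fixes x y :: real
  assumes "finite R"
  shows "(\<Sum>U\<in>Pow R. x ^ card U * y ^ card (R - U)) = (x + y) ^ card R"
  using assms
proof (induction rule: finite_induct)
  case empty
  then show ?case by simp
next
  case (insert a R)
  have disj: "Pow R \<inter> insert a ` Pow R = {}" using insert by auto
  have inj: "inj_on (insert a) (Pow R)" unfolding inj_on_def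
  proof (intro ballI impI)
    fix U1 U2 assume "U1 \<in> Pow R" "U2 \<in> Pow R" "insert a U1 = insert a U2"
    then show "U1 = U2" using insert(2) by (metis PowD insert_ident subsetD)
  qed
  have fin: "finite (Pow R)" "finite (insert a ` Pow R)" using insert by auto
  have s1: "(\<Sum>U\<in>Pow R. x ^ card U * y ^ card (insert a R - U))
          = y * (\<Sum>U\<in>Pow R. x ^ card U * y ^ card (R - U))"
    unfolding sum_distrib_left
  proof (rule sum.cong)
    fix U assume "U \<in> Pow R"
    then have "insert a R - U = insert a (R - U)" "a \<notin> R - U" using insert by auto
    then show "x ^ card U * y ^ card (insert a R - U) = y * (x ^ card U * y ^ card (R - U))"
      using insert by simp
  qed simp
  have s2: "(\<Sum>U\<in>insert a ` Pow R. x ^ card U * y ^ card (insert a R - U))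
          = x * (\<Sum>U\<in>Pow R. x ^ card U * y ^ card (R - U))"
    unfolding sum_distrib_left sum.reindex[OF inj] o_def
  proof (rule sum.cong)
    fix U assume U: "U \<in> Pow R"
    then have "insert a R - insert a U = R - U" "a \<notin> U" "finite U" using insert finite_subset by auto
    then show "x ^ card (insert a U) * y ^ card (insert a R - insert a U) = x * (x ^ card U * y ^ card (R - U))"
      by simp
  qed simp
  have "(\<Sum>U\<in>Pow (insert a R). x ^ card U * y ^ card (insert a R - U))
       = (\<Sum>U\<in>Pow R. x ^ card U * y ^ card (insert a R - U)) + (\<Sum>U\<in>insert a ` Pow R. x ^ card U * y ^ card (insert a R - U))"
    unfolding Pow_insert by (rule sum.union_disjoint[OF fin disj])
  also have "\<dots> = (x + y) * (x + y) ^ card R" using s1 s2 insert by (simp add: algebra_simps)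
  finally show ?case using insert by simp
qed

lemma conn_sub:
  assumes c1: "conn_from E v K1" and c2: "conn_from E v K2" and K1V: "K1 \<subseteq> V"
    and W2: "W \<inter> (K2 \<union> bdry E V K2) = K2" and K1W: "K1 \<subseteq> W"
  shows "K1 \<subseteq> K2"
proof
  fix b assume b: "b \<in> K1"
  have "(\<lambda>x y. E x y \<and> x \<in> K1 \<and> y \<in> K1)\<^sup>*\<^sup>* v b" using c1 b unfolding conn_from_def by blast
  then show "b \<in> K2"
  proof (induction rule: rtranclp_induct)
    case base
    then show ?case using c2 unfolding conn_from_def by blast
  next
    case (step w w')
    show ?case
    proof (rule ccontr)
      assume "w' \<notin> K2"
      then have "w' \<in> bdry E V K2" using step K1V unfolding bdry_def by blast
      moreover have "w' \<in> W" using step K1W by blast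
      ultimately show False using W2 \<open>w' \<notin> K2\<close> by blast
    qed
  qed
qed

lemma bdry_card:
  assumes "finite V" "K \<subseteq> V" and deg: "\<forall>u\<in>V. card {w\<in>V. E u w} \<le> d"
  shows "card (bdry E V K) \<le> d * card K"
proof -
  have "bdry E V K \<subseteq> (\<Union>a\<in>K. {w\<in>V. E a w})" unfolding bdry_def by blast
  then have "card (bdry E V K) \<le> card (\<Union>a\<in>K. {w\<in>V. E a w})"
    using assms by (intro card_mono) (auto intro: finite_subset[of _ V])
  also have "\<dots> \<le> (\<Sum>a\<in>K. card {w\<in>V. E a w})" by (rule card_UN_le) (use assms finite_subset in blast)
  also have "\<dots> \<le> (\<Sum>a\<in>K. d)" using deg assms by (intro sum_mono) blast
  finally show ?thesis by (simp add: mult.commute)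
qed

lemma count_conn:
  fixes E :: "'a \<Rightarrow> 'a \<Rightarrow> bool" and d :: nat
  assumes finV: "finite V" and deg: "\<forall>u\<in>V. card {w\<in>V. E u w} \<le> d" and d1: "1 \<le> d"
  shows "real (card {K. K \<subseteq> V \<and> conn_from E v K \<and> card K = s}) \<le> (4 * real d) ^ s"
proof -
  define C where "C = {K. K \<subseteq> V \<and> conn_from E v K \<and> card K = s}"
  define x :: real where "x = 1 / (2 * real d)"
  define y :: real where "y = 1 - x"
  have x0: "0 < x" and x1: "x \<le> 1/2" using d1 by (auto simp: x_def field_simps)
  have y0: "0 \<le> y" "y \<le> 1" using x0 x1 by (auto simp: y_def)
  define f where "f W = x ^ card W * y ^ card (V - W)" for W
  define R where "R K = V - (K \<union> bdry E V K)" for K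
  define F where "F K = (\<lambda>U. K \<union> U) ` Pow (R K)" for K
  have finC: "finite C" unfolding C_def by (rule finite_subset[of _ "Pow V"]) (use finV in auto)
  have FK: "sum f (F K) = x ^ card K * y ^ card (bdry E V K)" if "K \<subseteq> V" for K
  proof -
    have finK: "finite K" using that finV finite_subset by blast
    have finR: "finite (R K)" using finV unfolding R_def by auto
    have inj: "inj_on (\<lambda>U. K \<union> U) (Pow (R K))"
      unfolding inj_on_def R_def by blast
    have "sum f (F K) = (\<Sum>U\<in>Pow (R K). f (K \<union> U))"
      unfolding F_def by (simp add: sum.reindex[OF inj])
    also have "\<dots> = (\<Sum>U\<in>Pow (R K). x ^ card K * y ^ card (bdry E V K) * (x ^ card U * y ^ card (R K - U)))"
    proof (rule sum.cong)
      fix U assume U: "U \<in> Pow (R K)"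
      have finU: "finite U" using U finR finite_subset by blast
      have dis: "K \<inter> U = {}" using U unfolding R_def by blast
      have c1: "card (K \<union> U) = card K + card U" using card_Un_disjoint[OF finK finU dis] .
      have eq: "V - (K \<union> U) = bdry E V K \<union> (R K - U)" using U that unfolding R_def bdry_def by blast
      have finB: "finite (bdry E V K)" using finV unfolding bdry_def by auto
      have dis2: "bdry E V K \<inter> (R K - U) = {}" unfolding R_def by blast
      have c2: "card (V - (K \<union> U)) = card (bdry E V K) + card (R K - U)"
        unfolding eq using card_Un_disjoint[OF finB _ dis2] finR by blast
      show "f (K \<union> U) = x ^ card K * y ^ card (bdry E V K) * (x ^ card U * y ^ card (R K - U))"
        unfolding f_def c1 c2 by (simp add: power_add algebra_simps)
    qed simp
    also have "\<dots> = x ^ card K * y ^ card (bdry E V K) * (x + y) ^ card (R K)"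
      by (simp add: sum_distrib_left[symmetric] binsum[OF finR])
    finally show ?thesis by (simp add: y_def)
  qed
  have Wchar: "W \<inter> (K \<union> bdry E V K) = K \<and> K \<subseteq> W" if "W \<in> F K" for W K
    using that unfolding F_def R_def by blast
  have disj: "\<forall>i\<in>C. \<forall>j\<in>C. i \<noteq> j \<longrightarrow> F i \<inter> F j = {}"
  proof (intro ballI impI)
    fix K1 K2 assume K1: "K1 \<in> C" and K2: "K2 \<in> C" and ne: "K1 \<noteq> K2"
    show "F K1 \<inter> F K2 = {}"
    proof (rule ccontr)
      assume "F K1 \<inter> F K2 \<noteq> {}"
      then obtain W where W1: "W \<in> F K1" and W2: "W \<in> F K2" by blast
      have "K1 \<subseteq> K2" using conn_sub[of E v K1 K2 V W] K1 K2 Wchar[OF W1] Wchar[OF W2]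
        unfolding C_def by blast
      moreover have "K2 \<subseteq> K1" using conn_sub[of E v K2 K1 V W] K1 K2 Wchar[OF W1] Wchar[OF W2]
        unfolding C_def by blast
      ultimately show False using ne by blast
    qed
  qed
  have finF: "\<forall>i\<in>C. finite (F i)" unfolding F_def R_def using finV by auto
  have "(\<Sum>K\<in>C. sum f (F K)) = sum f (\<Union>(F ` C))"
    by (rule sum.UNION_disjoint[symmetric, OF finC finF disj])
  also have "\<dots> \<le> sum f (Pow V)"
  proof (rule sum_mono2)
    show "finite (Pow V)" using finV by simp
    show "\<Union>(F ` C) \<subseteq> Pow V" unfolding F_def R_def C_def by blast
    show "\<And>b. b \<in> Pow V - \<Union>(F ` C) \<Longrightarrow> 0 \<le> f b" unfolding f_def using x0 y0 by simp
  qed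
  also have "\<dots> = 1" unfolding f_def using binsum[OF finV, of x y] by (simp add: y_def)
  finally have S1: "(\<Sum>K\<in>C. sum f (F K)) \<le> 1" .
  have yd: "1/2 \<le> y ^ d"
  proof -
    have "1 + real d * (- x) \<le> (1 + - x) ^ d" by (rule Bernoulli_inequality) (use x1 in simp)
    moreover have "real d * x = 1/2" using d1 by (simp add: x_def)
    ultimately show ?thesis by (simp add: y_def)
  qed
  have lower: "(x * y ^ d) ^ s \<le> sum f (F K)" if "K \<in> C" for K
  proof -
    have KV: "K \<subseteq> V" and cK: "card K = s" using that unfolding C_def by auto
    have "card (bdry E V K) \<le> d * s" using bdry_card[OF finV KV deg] cK by simp
    then have "y ^ (d * s) \<le> y ^ card (bdry E V K)" using y0 by (intro power_decreasing) auto
    then have "x ^ s * y ^ (d * s) \<le> x ^ s * y ^ card (bdry E V K)"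
      using x0 by (intro mult_left_mono) auto
    then show ?thesis using FK[OF KV] cK by (simp add: power_mult_distrib power_mult mult.commute)
  qed
  have "real (card C) * (x * y ^ d) ^ s \<le> (\<Sum>K\<in>C. sum f (F K))"
    using sum_mono[of C "\<lambda>_. (x * y ^ d) ^ s" "\<lambda>K. sum f (F K)"] lower by simp
  with S1 have c1: "real (card C) * (x * y ^ d) ^ s \<le> 1" by linarith
  have "1 / (4 * real d) \<le> x * y ^ d"
  proof -
    have "x * (1/2) \<le> x * y ^ d" using yd x0 by (intro mult_left_mono) auto
    then show ?thesis using d1 by (simp add: x_def field_simps)
  qed
  then have "(1 / (4 * real d)) ^ s \<le> (x * y ^ d) ^ s" using d1 by (intro power_mono) auto
  then have "real (card C) * (1 / (4 * real d)) ^ s \<le> 1"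
    using c1 by (meson dual_order.trans mult_left_mono of_nat_0_le_iff)
  then show ?thesis using d1 unfolding C_def by (simp add: field_simps power_divide)
qed



lemma odd3: assumes "odd (t::nat)" "t \<noteq> 1" shows "3 \<le> t"
  using assms by presburger

lemma gx_bulk_Qv: "Qv i t \<in> gx_bulk n mx T \<longleftrightarrow> i < n \<and> odd t \<and> 3 \<le> t \<and> t < 2*T+1"
proof -
  have "Qv i t \<in> gx_bulk n mx T \<longleftrightarrow> i < n \<and> odd t \<and> 1 \<le> t \<and> t \<le> 2*T+1 \<and> t \<noteq> 1 \<and> t \<noteq> 2*T+1"
    unfolding gx_bulk_def gx_vertices_def by auto
  also have "\<dots> \<longleftrightarrow> i < n \<and> odd t \<and> 3 \<le> t \<and> t < 2*T+1"
    using odd3[of t] by auto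
  finally show ?thesis .
qed

lemma gx_bulk_Xv: "Xv c t \<in> gx_bulk n mx T \<longleftrightarrow> c < mx \<and> even t \<and> 2 \<le> t \<and> t \<le> 2*T"
  unfolding gx_bulk_def gx_vertices_def by auto

lemma gx_bulk_Zv: "Zv c t \<notin> gx_bulk n mx T"
  unfolding gx_bulk_def gx_vertices_def by auto

lemma gx_bulk_sub: "gx_bulk n mx T \<subseteq> gx_vertices n mx T"
  unfolding gx_bulk_def by auto

lemma finite_gx_vertices: "finite (gx_vertices n mx T)"
proof -
  have "gx_vertices n mx T \<subseteq> (\<lambda>(i,t). Qv i t) ` ({..<n} \<times> {..2*T+1}) \<union> (\<lambda>(c,t). Xv c t) ` ({..<mx} \<times> {..2*T})"
    unfolding gx_vertices_def by auto
  then show ?thesis by (rule finite_subset) auto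
qed

lemma finite_gx_bulk: "finite (gx_bulk n mx T)"
  using finite_subset[OF gx_bulk_sub finite_gx_vertices] .

lemma finite_atg_bulk: "finite (atg_bulk n mx mz T)"
proof -
  have "atg_bulk n mx mz T \<subseteq> (\<lambda>(i,t). Qv i t) ` ({..<n} \<times> {..2*T+1}) \<union> (\<lambda>(c,t). Xv c t) ` ({..<mx} \<times> {..2*T})
       \<union> (\<lambda>(c,t). Zv c t) ` ({..<mz} \<times> {..2*T+1})"
    unfolding atg_bulk_def by auto
  then show ?thesis by (rule finite_subset) auto
qed

lemma gx_bulk_atg: "gx_bulk n mx T \<subseteq> atg_bulk n mx mz T"
proof
  fix w assume "w \<in> gx_bulk n mx T"
  then show "w \<in> atg_bulk n mx mz T"
    by (cases w) (auto simp: gx_bulk_Qv gx_bulk_Xv gx_bulk_Zv atg_bulk_def)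
qed

lemma layer_step:
  assumes "a \<in> gx_bulk n mx T" "b \<in> gx_bulk n mx T" "gx_adj n mx HX T a b"
  shows "layer b div 2 \<le> layer a div 2 + 1"
proof -
  obtain A where A: "A \<in> gx_sets n mx HX T" "a \<in> A" "b \<in> A" using assms(3) unfolding gx_adj_def by blast
  show ?thesis
    using A(1) unfolding gx_sets_def
  proof (elim UnE CollectE exE conjE)
    fix c t assume At: "A = {Xv c (t - 1), Xv c (t + 1)} \<union> {Qv i t |i. i < n \<and> HX c i}" "odd t" "3 \<le> t"
    have "layer a \<in> {t - 1, t + 1, t}" "layer b \<in> {t - 1, t + 1, t}" using A(2,3) At by auto
    obtain k where k: "t = 2*k+1" using At(2) by (metis odd_two_times_div_two_succ)
    then show ?thesis using At \<open>layer a \<in> _\<close> \<open>layer b \<in> _\<close> by auto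
  next
    fix c assume Ac: "A = insert (Xv c 2) {Qv i 1 |i. i < n \<and> HX c i}"
    have "a = Xv c 2" "b = Xv c 2" using A(2,3) assms(1,2) Ac by (auto simp: gx_bulk_Qv)
    then show ?thesis by simp
  next
    fix c assume Ac: "A = insert (Xv c (2*T)) {Qv i (2*T+1) |i. i < n \<and> HX c i}"
    have "a = b" using A(2,3) assms(1,2) Ac by (auto simp: gx_bulk_Qv)
    then show ?thesis by simp
  qed
qed

lemma layer2: "w \<in> gx_bulk n mx T \<Longrightarrow> layer w = 2 \<Longrightarrow> w \<in> (\<lambda>c. Xv c 2) ` {..<mx}"
  by (cases w) (auto simp: gx_bulk_Qv gx_bulk_Xv gx_bulk_Zv)

lemma meta_cases:
  assumes "A \<in> meta_checks n mx mz HX HZ T"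
  shows "A \<inter> gx_bulk n mx T = {} \<or> (A \<in> gx_sets n mx HX T \<and> A \<subseteq> gx_bulk n mx T)"
  using assms unfolding meta_checks_def
proof (elim UnE CollectE exE conjE)
  fix c t assume At: "A = {Zv c (t - 1), Zv c (t + 1)} \<union> {Qv i t |i. i < n \<and> HZ c i}" "even t"
  have "A \<inter> gx_bulk n mx T = {}" using At by (auto simp: gx_bulk_Qv gx_bulk_Zv)
  then show ?thesis by blast
next
  fix c t assume At: "A = {Xv c (t - 1), Xv c (t + 1)} \<union> {Qv i t |i. i < n \<and> HX c i}"
    "c < mx" "odd t" "3 \<le> t" "t \<le> 2 * T - 1"
  have "A \<in> gx_sets n mx HX T" unfolding gx_sets_def using At by blast
  moreover have "A \<subseteq> gx_bulk n mx T" proof -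
    obtain k where k: "t = 2*k+1" using At(3) by (metis odd_two_times_div_two_succ)
    show ?thesis using At k by (auto simp: gx_bulk_Qv gx_bulk_Xv)
  qed
  ultimately show ?thesis by blast
qed



lemma card_symdiff:
  assumes "finite X" "finite Y"
  shows "card ((X - Y) \<union> (Y - X)) + 2 * card (X \<inter> Y) = card X + card Y"
proof -
  have a: "card X = card (X - Y) + card (X \<inter> Y)"
    using card_Int_Diff[of X Y] assms by simp
  have b: "card Y = card (Y - X) + card (X \<inter> Y)"
    using card_Int_Diff[of Y X] assms by (simp add: Int_commute)
  have c: "card ((X - Y) \<union> (Y - X)) = card (X - Y) + card (Y - X)"
    using assms by (intro card_Un_disjoint) auto
  show ?thesis using a b c by simp
qed

lemma even_symdiff:
  assumes "finite X" "finite Y"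
  shows "even (card ((X - Y) \<union> (Y - X))) \<longleftrightarrow> (even (card X) \<longleftrightarrow> even (card Y))"
proof -
  have "card ((X - Y) \<union> (Y - X)) + 2 * card (X \<inter> Y) = card X + card Y" by (rule card_symdiff[OF assms])
  then have "even (card ((X - Y) \<union> (Y - X)) + 2 * card (X \<inter> Y)) = even (card X + card Y)" by simp
  then show ?thesis by simp
qed

lemma decode_component:
  assumes eta: "{v. eta v} \<subseteq> atg_bulk n mx mz T"
    and dec: "min_weight_decoding n mx mz HX HZ T eta beta"
    and bad: "\<not> CC_X n mx HX T eta beta"
  shows "\<exists>K. K \<subseteq> gx_bulk n mx T \<and> (\<exists>u\<in>K. layer u = 2 \<and> conn_from (gx_adj n mx HX T) u K)
           \<and> T \<le> card K \<and> card K \<le> 2 * card (K \<inter> {v. eta v})"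
proof -
  define V where "V = gx_bulk n mx T"
  define E where "E = gx_adj n mx HX T"
  define M where "M = marked n mx T eta beta"
  define R where "R = (\<lambda>a b. E a b \<and> M a \<and> M b)"
  obtain u v where uv: "M u" "M v" "layer u = 2" "layer v = 2*T" "R\<^sup>*\<^sup>* u v"
    using bad unfolding CC_X_def M_def R_def E_def by blast
  define K where "K = {w. R\<^sup>*\<^sup>* u w}"
  have KM: "M w" if "w \<in> K" for w
    using that unfolding K_def
  proof -
    assume "w \<in> {w. R\<^sup>*\<^sup>* u w}"
    then have "R\<^sup>*\<^sup>* u w" by simp
    then show "M w" by (induction rule: rtranclp_induct) (use uv in \<open>auto simp: R_def\<close>)
  qed
  have MV: "M w \<Longrightarrow> w \<in> V" for w unfolding M_def marked_def V_def by blast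
  have KV: "K \<subseteq> V" using KM MV by blast
  have finK: "finite K" using KV finite_gx_bulk unfolding V_def by (rule finite_subset)
  have uK: "u \<in> K" unfolding K_def by simp
  have conn: "conn_from E u K"
    unfolding conn_from_def
  proof (intro conjI ballI)
    show "u \<in> K" by (rule uK)
    fix b assume "b \<in> K"
    then have "R\<^sup>*\<^sup>* u b" unfolding K_def by simp
    then show "(\<lambda>x y. E x y \<and> x \<in> K \<and> y \<in> K)\<^sup>*\<^sup>* u b"
    proof (induction rule: rtranclp_induct)
      case base then show ?case by simp
    next
      case (step w w')
      have "w \<in> K" "w' \<in> K" using step(1,2) unfolding K_def by auto
      moreover have "E w w'" using step(2) unfolding R_def by simp
      ultimately show ?case by (intro rtranclp.rtrancl_into_rtrancl[OF step.IH]) simp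
    qed
  qed
  define g where "g w = layer w div 2" for w
  have gcov: "{1..g w} \<subseteq> g ` K" if "R\<^sup>*\<^sup>* u w" for w
    using that
  proof (induction rule: rtranclp_induct)
    case base
    have "g u = 1" using uv(3) by (simp add: g_def)
    then show ?case using uK by force
  next
    case (step w w')
    have "w \<in> V" "w' \<in> V" using step(2) MV unfolding R_def by auto
    then have "g w' \<le> g w + 1" using step(2) layer_step unfolding R_def g_def V_def E_def by blast
    moreover have "w' \<in> K" using step(1,2) unfolding K_def by auto
    ultimately show ?case
    proof -
      assume gw: "g w' \<le> g w + 1" and wK: "w' \<in> K"
      show ?thesis
      proof
        fix j assume "j \<in> {1..g w'}"
        then have "j \<in> {1..g w} \<or> j = g w'" using gw by auto
        then show "j \<in> g ` K" using step.IH wK by auto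
      qed
    qed
  qed
  have "{1..T} \<subseteq> g ` K" using gcov[OF uv(5)] uv(4) by (simp add: g_def)
  then have "card {1..T} \<le> card (g ` K)" using finK by (intro card_mono) auto
  also have "\<dots> \<le> card K" using card_image_le[OF finK] .
  finally have TK: "T \<le> card K" by simp
  define Bs where "Bs = {v. beta v}"
  define Es where "Es = {v. eta v}"
  define beta' where "beta' = (\<lambda>w. beta w \<noteq> (w \<in> K))"
  have finA: "finite (atg_bulk n mx mz T)" by (rule finite_atg_bulk)
  have Bsub: "Bs \<subseteq> atg_bulk n mx mz T" using dec unfolding min_weight_decoding_def Bs_def by blast
  have finBs: "finite Bs" using Bsub finA finite_subset by blast
  have finEs: "finite Es" using eta finA finite_subset unfolding Es_def by blast
  have KA: "K \<subseteq> atg_bulk n mx mz T" using KV gx_bulk_atg unfolding V_def by blast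
  have b'set: "{w. beta' w} = (Bs - K) \<union> (K - Bs)" unfolding beta'_def Bs_def by auto
  have KEs: "K \<inter> Es = K - Bs" using KM unfolding M_def marked_def Es_def Bs_def by auto
  have ms: "same_metasyndrome (meta_checks n mx mz HX HZ T) eta beta"
    using dec unfolding min_weight_decoding_def by blast
  have ms': "same_metasyndrome (meta_checks n mx mz HX HZ T) eta beta'"
    unfolding same_metasyndrome_def
  proof
    fix A assume A: "A \<in> meta_checks n mx mz HX HZ T"
    have h: "even (card (A \<inter> Bs)) = even (card (A \<inter> Es))"
      using ms A unfolding same_metasyndrome_def Bs_def Es_def by blast
    have evK: "even (card (A \<inter> K))"
    proof (cases "A \<inter> K = {}")
      case True then show ?thesis by simp
    next
      case False
      then obtain w where w: "w \<in> A" "w \<in> K" by blast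
      from meta_cases[OF A] have AV: "A \<in> gx_sets n mx HX T" "A \<subseteq> V"
        using w KV unfolding V_def by blast+
      have "A \<inter> K = A \<inter> {x. M x}"
      proof
        show "A \<inter> K \<subseteq> A \<inter> {x. M x}" using KM by blast
        show "A \<inter> {x. M x} \<subseteq> A \<inter> K"
        proof
          fix w' assume w': "w' \<in> A \<inter> {x. M x}"
          show "w' \<in> A \<inter> K"
          proof (cases "w' = w")
            case True then show ?thesis using w by simp
          next
            case False
            then have "E w w'" using AV(1) w w' unfolding E_def gx_adj_def by blast
            then have "R w w'" using KM[OF w(2)] w' unfolding R_def by blast
            then show ?thesis using w w' unfolding K_def by (auto intro: rtranclp.rtrancl_into_rtrancl)
          qed
        qed
      qed
      also have "\<dots> = ((A \<inter> Es) - (A \<inter> Bs)) \<union> ((A \<inter> Bs) - (A \<inter> Es))"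
        using AV(2) unfolding M_def marked_def Es_def Bs_def V_def by auto
      finally have "A \<inter> K = ((A \<inter> Es) - (A \<inter> Bs)) \<union> ((A \<inter> Bs) - (A \<inter> Es))" .
      then show ?thesis using even_symdiff[of "A \<inter> Es" "A \<inter> Bs"] finBs finEs h by simp
    qed
    have "A \<inter> {w. beta' w} = ((A \<inter> Bs) - (A \<inter> K)) \<union> ((A \<inter> K) - (A \<inter> Bs))"
      unfolding b'set by blast
    then have "even (card (A \<inter> {w. beta' w})) = even (card (A \<inter> Bs))"
      using even_symdiff[of "A \<inter> Bs" "A \<inter> K"] finBs finK evK by simp
    then show "even (card (A \<inter> {v. beta' v})) = even (card (A \<inter> {v. eta v}))"
      using h unfolding Es_def by simp
  qed
  have "{w. beta' w} \<subseteq> atg_bulk n mx mz T" unfolding b'set using Bsub KA by blast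
  then have "card Bs \<le> card {w. beta' w}"
    using dec ms' unfolding min_weight_decoding_def Bs_def by blast
  moreover have "card {w. beta' w} + 2 * card (Bs \<inter> K) = card Bs + card K"
    unfolding b'set by (rule card_symdiff[OF finBs finK])
  ultimately have c1: "2 * card (Bs \<inter> K) \<le> card K" by linarith
  have "card (K - Bs) + card (Bs \<inter> K) = card K"
    using card_Int_Diff[of K Bs] finK by (simp add: Int_commute)
  then have "card K \<le> 2 * card (K \<inter> Es)" using c1 KEs by simp
  then show ?thesis using KV TK conn uK uv(3) unfolding V_def E_def Es_def by blast
qed



lemma ev_bound:
  assumes noise: "local_stochastic B p D" and KB: "K \<subseteq> B" and finK: "finite K"
    and p0: "0 \<le> p" and p1: "p \<le> 1"
  shows "measure_pmf.prob D {eta. card K \<le> 2 * card (K \<inter> {v. eta v})} \<le> (2 * sqrt p) ^ card K"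
proof -
  define s where "s = card K"
  define k where "k = (s + 1) div 2"
  define Subs where "Subs = {S. S \<subseteq> K \<and> card S = k}"
  have "Subs \<subseteq> Pow K" unfolding Subs_def by blast
  then have finSubs: "finite Subs" using finK by (simp add: finite_subset)
  have sub: "{eta. card K \<le> 2 * card (K \<inter> {v. eta v})} \<subseteq> (\<Union>S\<in>Subs. {eta. S \<subseteq> {v. eta v}})"
  proof
    fix eta assume "eta \<in> {eta. card K \<le> 2 * card (K \<inter> {v. eta v})}"
    then have "card K \<le> 2 * card (K \<inter> {v. eta v})" by simp
    then have "k \<le> card (K \<inter> {v. eta v})" unfolding k_def s_def by presburger
    then obtain S where S: "S \<subseteq> K \<inter> {v. eta v}" "card S = k" by (rule obtain_subset_with_card_n)
    then have "S \<in> Subs" unfolding Subs_def by simp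
    moreover have "eta \<in> {eta. S \<subseteq> {v. eta v}}" using S(1) by simp
    ultimately show "eta \<in> (\<Union>S\<in>Subs. {eta. S \<subseteq> {v. eta v}})" by (rule UN_I)
  qed
  have "measure_pmf.prob D {eta. card K \<le> 2 * card (K \<inter> {v. eta v})}
        \<le> measure_pmf.prob D (\<Union>S\<in>Subs. {eta. S \<subseteq> {v. eta v}})"
    using sub by (intro measure_pmf.finite_measure_mono) auto
  also have "\<dots> \<le> (\<Sum>S\<in>Subs. measure_pmf.prob D {eta. S \<subseteq> {v. eta v}})"
    by (rule measure_pmf.finite_measure_subadditive_finite[OF finSubs]) auto
  also have "\<dots> \<le> (\<Sum>S\<in>Subs. p ^ k)"
  proof (rule sum_mono)
    fix S assume "S \<in> Subs"
    then have "S \<subseteq> B" "card S = k" using KB unfolding Subs_def by auto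
    then show "measure_pmf.prob D {eta. S \<subseteq> {v. eta v}} \<le> p ^ k"
    proof -
      have "\<forall>S\<subseteq>B. measure_pmf.prob D {eta. S \<subseteq> {v. eta v}} \<le> p ^ card S"
        using noise unfolding local_stochastic_def by blast
      then show ?thesis using \<open>S \<subseteq> B\<close> \<open>card S = k\<close> by auto
    qed
  qed
  also have "\<dots> = real (s choose k) * p ^ k"
    using n_subsets[OF finK, of k] unfolding Subs_def s_def by simp
  also have "\<dots> \<le> 2 ^ s * sqrt p ^ s"
  proof (rule mult_mono)
    have "s choose k \<le> 2 ^ s" by (rule binomial_le_pow2)
    then show "real (s choose k) \<le> 2 ^ s" by (simp add: of_nat_le_iff[symmetric])
    have "p ^ k = sqrt p ^ (2 * k)" using p0 by (simp add: power_mult)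
    also have "\<dots> \<le> sqrt p ^ s" using p0 p1 by (intro power_decreasing) (auto simp: k_def)
    finally show "p ^ k \<le> sqrt p ^ s" .
  qed (use p0 in auto)
  finally show ?thesis unfolding s_def by (simp add: power_mult_distrib)
qed


lemma geom_bound:
  fixes q :: real
  assumes "0 \<le> q" "q < 1"
  shows "(\<Sum>s=T..N. q ^ s) \<le> q ^ T / (1 - q)"
proof -
  have "(\<Sum>s=T..N. q ^ s) = (if N < T then 0 else (q ^ T - q ^ Suc N) / (1 - q))"
    using sum_gp[of q T N] assms by auto
  moreover have "0 \<le> q ^ T / (1 - q)" using assms by simp
  moreover have "(q ^ T - q ^ Suc N) / (1 - q) \<le> q ^ T / (1 - q)"
    using assms by (intro divide_right_mono) auto
  ultimately show ?thesis by auto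
qed

theorem lemma5p2:
  fixes n mx mz T :: nat
    and HX HZ :: "nat \<Rightarrow> nat \<Rightarrow> bool"
    and z p :: real
    and D :: "(atg_vertex \<Rightarrow> bool) pmf"
    and dec :: "(atg_vertex \<Rightarrow> bool) \<Rightarrow> (atg_vertex \<Rightarrow> bool)"
  assumes css: "css_code n mx mz HX HZ"
    and T: "1 \<le> T"
    and deg: "\<forall>v\<in>gx_vertices n mx T.
               real (card {w\<in>gx_vertices n mx T. gx_adj n mx HX T v w}) \<le> z"
    and p_nonneg: "0 \<le> p"
    and p_small: "p < 1 / (8 * z)\<^sup>2"
    and noise: "local_stochastic (atg_bulk n mx mz T) p D"
    and decoder: "\<forall>eta. {v. eta v} \<subseteq> atg_bulk n mx mz T \<longrightarrow>
                    min_weight_decoding n mx mz HX HZ T eta (dec eta)"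
  shows "measure_pmf.prob D {eta. \<not> CC_X n mx HX T eta (dec eta)}
           \<le> real mx * (p / (1 / (8 * z)\<^sup>2)) powr (real T / 2)
               / (1 - sqrt (p / (1 / (8 * z)\<^sup>2)))"
proof (cases "mx = 0")
  case True
  have "{eta. \<not> CC_X n mx HX T eta (dec eta)} = {}"
  proof (rule ccontr)
    assume "{eta. \<not> CC_X n mx HX T eta (dec eta)} \<noteq> {}"
    then obtain eta u where "marked n mx T eta (dec eta) u" "layer u = 2"
      unfolding CC_X_def by blast
    then have "u \<in> (\<lambda>c. Xv c 2) ` {..<mx}" using layer2 unfolding marked_def by blast
    then show False using True by simp
  qed
  then show ?thesis using True by simp
next
  case False
  define V where "V = gx_bulk n mx T"
  define E where "E = gx_adj n mx HX T"
  define L2 where "L2 = (\<lambda>c. Xv c 2) ` {..<mx}"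
  have z1: "1 \<le> z"
  proof -
    have "full_rank_F2 mx n HX" using css unfolding css_code_def by blast
    moreover have "{0} \<subseteq> {..<mx}" using False by simp
    ultimately have "\<exists>i<n. odd (card {c\<in>{0::nat}. HX c i})"
      unfolding full_rank_F2_def by blast
    then obtain i where i: "i < n" "odd (card {c\<in>{0::nat}. HX c i})" by blast
    have hx: "HX 0 i"
    proof (rule ccontr)
      assume "\<not> HX 0 i"
      then have e: "{c\<in>{0::nat}. HX c i} = {}" by auto
      show False using i(2) unfolding e by simp
    qed
    have x0: "Xv 0 2 \<in> gx_vertices n mx T" using False T unfolding gx_vertices_def by simp
    have q0: "Qv i 1 \<in> gx_vertices n mx T" using i T unfolding gx_vertices_def by simp
    have "insert (Xv 0 2) {Qv i 1 |i. i < n \<and> HX 0 i} \<in> {insert (Xv c 2) {Qv i 1 |i. i < n \<and> HX c i} | c. c < mx}"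
      using False by blast
    then have As: "insert (Xv 0 2) {Qv i 1 |i. i < n \<and> HX 0 i} \<in> gx_sets n mx HX T"
      unfolding gx_sets_def by (rule UnI1[OF UnI2])
    have "Qv i 1 \<in> insert (Xv 0 2) {Qv i 1 |i. i < n \<and> HX 0 i}" using i hx by blast
    then have "gx_adj n mx HX T (Xv 0 2) (Qv i 1)" unfolding gx_adj_def
      by (intro conjI bexI[OF _ As]) auto
    then have "Qv i 1 \<in> {w\<in>gx_vertices n mx T. gx_adj n mx HX T (Xv 0 2) w}" using q0 by blast
    then have "0 < card {w\<in>gx_vertices n mx T. gx_adj n mx HX T (Xv 0 2) w}"
      using finite_gx_vertices[of n mx T] by (subst card_gt_0_iff) auto
    then show ?thesis using deg x0 by force
  qed
  define d where "d = nat (floor z)"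
  have d1: "1 \<le> d" using z1 unfolding d_def by linarith
  have dz: "real d \<le> z" using z1 unfolding d_def by linarith
  have degV: "\<forall>u\<in>V. card {w\<in>V. E u w} \<le> d"
  proof
    fix u assume u: "u \<in> V"
    have "card {w\<in>V. E u w} \<le> card {w\<in>gx_vertices n mx T. gx_adj n mx HX T u w}"
      using gx_bulk_sub finite_gx_vertices unfolding V_def E_def by (intro card_mono) auto
    also have "real \<dots> \<le> z" using deg u gx_bulk_sub unfolding V_def by blast
    finally have "real (card {w\<in>V. E u w}) \<le> z" by simp
    then show "card {w\<in>V. E u w} \<le> d" unfolding d_def by (simp add: le_nat_floor)
  qed
  have finV: "finite V" unfolding V_def by (rule finite_gx_bulk)
  define sp where "sp = sqrt p"
  define q where "q = 8 * z * sp"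
  have sp0: "0 \<le> sp" using p_nonneg unfolding sp_def by simp
  have q0: "0 \<le> q" using z1 sp0 unfolding q_def by simp
  have q1: "q < 1"
  proof (rule ccontr)
    assume "\<not> q < 1"
    then have "1 / (8 * z) \<le> sp" using z1 unfolding q_def by (simp add: field_simps)
    then have "(1 / (8 * z))\<^sup>2 \<le> sp\<^sup>2" using z1 by (intro power_mono) auto
    moreover have "sp\<^sup>2 = p" using p_nonneg unfolding sp_def by simp
    ultimately have "(1 / (8 * z))\<^sup>2 \<le> p" by simp
    then have "1 / (8 * z)\<^sup>2 \<le> p" by (simp add: power_divide)
    then show False using p_small by linarith
  qed
  have p1: "p \<le> 1"
  proof -
    have "1 \<le> 8 * z" using z1 by simp
    then have "1 * 1 \<le> (8 * z) * (8 * z)" by (intro mult_mono) auto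
    then have "(8 * z)\<^sup>2 \<ge> 1" by (simp add: power2_eq_square)
    then have "1 / (8 * z)\<^sup>2 \<le> 1" by (subst divide_le_eq_1_pos) auto
    then show ?thesis using p_small by simp
  qed
  define KK where "KK = {K. K \<subseteq> V \<and> (\<exists>u\<in>K. layer u = 2 \<and> conn_from E u K) \<and> T \<le> card K}"
  define Ev :: "atg_vertex set \<Rightarrow> (atg_vertex \<Rightarrow> bool) set" where "Ev K = {eta. card K \<le> 2 * card (K \<inter> {v. eta v})}" for K
  have finKK: "finite KK"
  proof -
    have "KK \<subseteq> Pow V" unfolding KK_def by blast
    then show ?thesis using finV by (simp add: finite_subset)
  qed
  have cover: "{eta. \<not> CC_X n mx HX T eta (dec eta)} \<inter> set_pmf D \<subseteq> (\<Union>K\<in>KK. Ev K)"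
  proof
    fix eta assume e: "eta \<in> {eta. \<not> CC_X n mx HX T eta (dec eta)} \<inter> set_pmf D"
    have eb: "{v. eta v} \<subseteq> atg_bulk n mx mz T" using e noise unfolding local_stochastic_def by blast
    have "min_weight_decoding n mx mz HX HZ T eta (dec eta)" using decoder eb by blast
    then obtain K where K: "K \<subseteq> V" "\<exists>u\<in>K. layer u = 2 \<and> conn_from E u K"
        "T \<le> card K" "card K \<le> 2 * card (K \<inter> {v. eta v})"
      using decode_component[OF eb] e unfolding V_def E_def by blast
    then have "K \<in> KK" unfolding KK_def by blast
    moreover have "eta \<in> Ev K" using K(4) unfolding Ev_def by simp
    ultimately show "eta \<in> (\<Union>K\<in>KK. Ev K)" by (rule UN_I)
  qed
  have "measure_pmf.prob D {eta. \<not> CC_X n mx HX T eta (dec eta)}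
      = measure_pmf.prob D ({eta. \<not> CC_X n mx HX T eta (dec eta)} \<inter> set_pmf D)"
    by (simp add: measure_Int_set_pmf)
  also have "\<dots> \<le> measure_pmf.prob D (\<Union>K\<in>KK. Ev K)"
    using cover by (intro measure_pmf.finite_measure_mono) auto
  also have "\<dots> \<le> (\<Sum>K\<in>KK. measure_pmf.prob D (Ev K))"
    by (rule measure_pmf.finite_measure_subadditive_finite[OF finKK]) auto
  also have "\<dots> \<le> (\<Sum>K\<in>KK. (2 * sp) ^ card K)"
  proof (rule sum_mono)
    fix K assume "K \<in> KK"
    then have KV: "K \<subseteq> V" unfolding KK_def by blast
    then have "K \<subseteq> atg_bulk n mx mz T" using gx_bulk_atg unfolding V_def by blast
    moreover have "finite K" using KV finV finite_subset by blast
    ultimately show "measure_pmf.prob D (Ev K) \<le> (2 * sp) ^ card K"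
      unfolding Ev_def sp_def using ev_bound[OF noise _ _ p_nonneg p1] by blast
  qed
  also have "\<dots> \<le> (\<Sum>K\<in>KK. \<Sum>u\<in>L2. \<Sum>s\<in>{T..card V}.
                  (if u \<in> K \<and> conn_from E u K \<and> card K = s then (2 * sp) ^ card K else 0))"
  proof (rule sum_mono)
    fix K assume "K \<in> KK"
    then obtain u where u: "u \<in> K" "layer u = 2" "conn_from E u K" and KV: "K \<subseteq> V" and TK: "T \<le> card K"
      unfolding KK_def by blast
    have uL: "u \<in> L2" using layer2[of u n mx T] u KV unfolding L2_def V_def by blast
    have sK: "card K \<in> {T..card V}" using TK card_mono[OF finV KV] by simp
    have finL: "finite L2" unfolding L2_def by simp
    have "(2 * sp) ^ card K = (if u \<in> K \<and> conn_from E u K \<and> card K = card K then (2 * sp) ^ card K else 0)"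
      using u by simp
    also have "\<dots> \<le> (\<Sum>s\<in>{T..card V}. (if u \<in> K \<and> conn_from E u K \<and> card K = s then (2 * sp) ^ card K else 0))"
      by (rule member_le_sum[OF sK]) (use sp0 in auto)
    also have "\<dots> \<le> (\<Sum>u\<in>L2. \<Sum>s\<in>{T..card V}. (if u \<in> K \<and> conn_from E u K \<and> card K = s then (2 * sp) ^ card K else 0))"
      by (rule member_le_sum[OF uL _ finL, where f = "\<lambda>u. \<Sum>s\<in>{T..card V}. (if u \<in> K \<and> conn_from E u K \<and> card K = s then (2 * sp) ^ card K else 0)"])
         (use sp0 in \<open>auto intro: sum_nonneg\<close>)
    finally show "(2 * sp) ^ card K \<le> (\<Sum>u\<in>L2. \<Sum>s\<in>{T..card V}. (if u \<in> K \<and> conn_from E u K \<and> card K = s then (2 * sp) ^ card K else 0))" .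
  qed
  also have "\<dots> = (\<Sum>u\<in>L2. \<Sum>s\<in>{T..card V}. \<Sum>K\<in>KK.
                  (if u \<in> K \<and> conn_from E u K \<and> card K = s then (2 * sp) ^ card K else 0))"
    by (subst sum.swap) (subst (2) sum.swap, rule refl)
  also have "\<dots> \<le> (\<Sum>u\<in>L2. \<Sum>s\<in>{T..card V}. q ^ s)"
  proof (intro sum_mono)
    fix u s
    define C where "C = {K. K \<subseteq> V \<and> conn_from E u K \<and> card K = s}"
    have "(\<Sum>K\<in>KK. (if u \<in> K \<and> conn_from E u K \<and> card K = s then (2 * sp) ^ card K else 0))
        = (\<Sum>K\<in>{K\<in>KK. u \<in> K \<and> conn_from E u K \<and> card K = s}. (2 * sp) ^ card K)"
      by (rule sum.inter_filter[OF finKK, symmetric])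
    also have "\<dots> = (\<Sum>K\<in>{K\<in>KK. u \<in> K \<and> conn_from E u K \<and> card K = s}. (2 * sp) ^ s)"
      by (rule sum.cong) auto
    also have "\<dots> = real (card {K\<in>KK. u \<in> K \<and> conn_from E u K \<and> card K = s}) * (2 * sp) ^ s" by simp
    also have "\<dots> \<le> real (card C) * (2 * sp) ^ s"
    proof (rule mult_right_mono)
      have "C \<subseteq> Pow V" unfolding C_def by blast
      then have "finite C" using finV by (simp add: finite_subset)
      moreover have "{K\<in>KK. u \<in> K \<and> conn_from E u K \<and> card K = s} \<subseteq> C" unfolding C_def KK_def by blast
      ultimately show "real (card {K\<in>KK. u \<in> K \<and> conn_from E u K \<and> card K = s}) \<le> real (card C)"
        by (simp add: card_mono)
    qed (use sp0 in simp)
    also have "\<dots> \<le> (4 * real d) ^ s * (2 * sp) ^ s"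
      by (rule mult_right_mono) (use count_conn[OF finV degV d1, of u s] sp0 in \<open>auto simp: C_def\<close>)
    also have "\<dots> = ((4 * real d) * (2 * sp)) ^ s" by (rule power_mult_distrib[symmetric])
    also have "\<dots> = (8 * real d * sp) ^ s" by (intro arg_cong[where f="\<lambda>x. x ^ s"]) simp
    also have "\<dots> \<le> q ^ s" unfolding q_def using dz sp0 d1
      by (intro power_mono mult_right_mono) auto
    finally show "(\<Sum>K\<in>KK. (if u \<in> K \<and> conn_from E u K \<and> card K = s then (2 * sp) ^ card K else 0)) \<le> q ^ s" .
  qed
  also have "\<dots> \<le> (\<Sum>u\<in>L2. q ^ T / (1 - q))"
    by (intro sum_mono geom_bound q0 q1)
  also have "\<dots> = real (card L2) * (q ^ T / (1 - q))" by simp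
  also have "\<dots> \<le> real mx * (q ^ T / (1 - q))"
  proof (rule mult_right_mono)
    show "real (card L2) \<le> real mx" unfolding L2_def using card_image_le[of "{..<mx}" "\<lambda>c. Xv c 2"] by simp
    show "0 \<le> q ^ T / (1 - q)" using q0 q1 by simp
  qed
  also have "\<dots> = real mx * (p / (1 / (8 * z)\<^sup>2)) powr (real T / 2)
               / (1 - sqrt (p / (1 / (8 * z)\<^sup>2)))"
  proof -
    have r: "p / (1 / (8 * z)\<^sup>2) = q\<^sup>2" unfolding q_def sp_def using p_nonneg
      by (simp add: power_mult_distrib)
    have sq: "sqrt (q\<^sup>2) = q" using q0 by simp
    have pw: "(q\<^sup>2) powr (real T / 2) = q ^ T"
    proof (cases "q = 0")
      case True then show ?thesis using T by simp
    next
      case False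
      then have "0 < q" using q0 by simp
      then have "(q\<^sup>2) powr (real T / 2) = (q powr 2) powr (real T / 2)" by (simp add: powr_realpow)
      also have "\<dots> = q powr (real T)" by (simp add: powr_powr)
      also have "\<dots> = q ^ T" using \<open>0 < q\<close> by (simp add: powr_realpow)
      finally show ?thesis .
    qed
    show ?thesis unfolding r sq pw by simp
  qed
  finally show ?thesis .
qed

end
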